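(* Let $k$ be an algebraically closed field of characteristic $0$ and $\alpha$ a $k$-valued pseudocharacter of $\mathrm{Cob}_2$. Then $Z_\alpha(T)$ is rational of the form $$Z_\alpha(T)=\alpha_0+mT+\sum_{i=1}^s\frac{m_iT}{1-\lambda_iT}=\mu+mT+\sum_{i=1}^s\frac{m_i\lambda_i^{-1}}{1-\lambda_iT},$$ with $m\in\{0,1,2,\dots\}$, $s\ge0$, $m_i\in\{1,2,\dots\}$, $\lambda_i\in k^\times$, and $\mu=\alpha_0-\sum_{i=1}^s m_i\lambda_i^{-1}$. Moreover $\deg_\alpha(\mathbb S^1)=m+\sum_{i=1}^s m_i$, which equals the coefficient $\alpha_1$ of $T$ in $Z_\alpha(T)$.
   Context: $\mathrm{Cob}_2$ is the rigid symmetric monoidal category of oriented two-dimensional cobordisms between closed oriented one-manifolds (finite disjoint unions of circles), with unit the empty manifold $\emptyset$. An evaluation is a monoid homomorphism $\alpha:\mathrm{End}_{\mathrm{Cob}_2}(\emptyset)\to k$ (so $\alpha(\emptyset)=1$ and $\alpha$ is multiplicative on disjoint unions); it is determined by $\alpha_g:=\alpha(S_g)$, $S_g$ the closed connected oriented surface of genus $g$, and $Z_\alpha(T)=\sum_{g\ge0}\alpha_gT^g\in k[[T]]$. Extend $\alpha$ linearly to $k$-linear combinations of closed surfaces. For an object $N$ and $n\ge1$, the antisymmetrizer is $e^-_{N,n}=\sum_{\sigma\in S_n}\mathrm{sgn}(\sigma)\sigma\in k\,\mathrm{End}(N^{\sqcup n})$, $\sigma$ acting by the permutation cobordism. For a (linear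 combination of) endomorphism(s) $f$ of an object, $\mathrm{cl}(f)$ is its closure (categorical trace: gluing outgoing boundary to incoming boundary), a (combination of) closed surface(s). The degree $\deg_\alpha(N)$ is the least integer $d\ge0$ such that $\alpha(\mathrm{cl}(h\circ e^-_{N,d+1}))=0$ for all cobordisms $h\in\mathrm{End}_{\mathrm{Cob}_2}(N^{\sqcup(d+1)})$ ($\infty$ if none). $\alpha$ is a pseudocharacter (pseudo-TQFT) of $\mathrm{Cob}_2$ if $\deg_\alpha(N)<\infty$ for every object $N$. $\mathbb S^1$ denotes the circle. *)

theory Defs
  imports "HOL-Computational_Algebra.Computational_Algebra"
          "HOL-Combinatorics.Permutations"
          "HOL-Library.Multiset"
begin

text \<open>An object is (up to isomorphism) a finite disjoint union of M circles.
  A closed surface (endomorphism of the empty manifold) is a finite multiset of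
  genera of its connected components.  An evaluation alpha is a monoid
  homomorphism from closed surfaces to k; it is the same as the sequence
  a g = alpha(S_g), and alpha(G) is the product of a over the components.\<close>

definition eval_closed :: "(nat \<Rightarrow> 'k::comm_ring_1) \<Rightarrow> nat multiset \<Rightarrow> 'k" where
  "eval_closed a G = prod_mset (image_mset a G)"

text \<open>An endomorphism h of the object consisting of M circles (a cobordism
  from M circles to M circles, up to diffeomorphism rel boundary) is encoded by
  (c, g, G): boundary circle (False, i) is the i-th incoming circle,
  (True, i) the i-th outgoing circle (i < M); c assigns to each boundary
  circle a label of the connected component containing it; g gives the genus of
  the component with a given label; G is the multiset of genera of closed
  components.  Every such triple describes a cobordism and every cobordism
  arises this way (classification of compact oriented surfaces).

  The closure of h composed with the permutation cobordism p is obtained by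
  gluing the outgoing circle j of h to the incoming circle p j of h.
  Components of the result are the connected components of the graph whose
  vertices are the component labels of h and whose edges are these gluings;
  a component with vertex set C and e edges has genus
  (sum of genera over C) + e - card C + 1.\<close>

definition glue_edges :: "nat \<Rightarrow> (bool \<times> nat \<Rightarrow> nat) \<Rightarrow> (nat \<Rightarrow> nat) \<Rightarrow> (nat \<times> nat) set" where
  "glue_edges M c p = {(c (True, j), c (False, p j)) | j. j < M}"

definition closure_twist ::
  "nat \<Rightarrow> (bool \<times> nat \<Rightarrow> nat) \<Rightarrow> (nat \<Rightarrow> nat) \<Rightarrow> nat multiset \<Rightarrow> (nat \<Rightarrow> nat) \<Rightarrow> nat multiset" where
  "closure_twist M c g G p =
     (let V = c ` ({False, True} \<times> {..<M});
          R = glue_edges M c p;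
          E = (R \<union> converse R)\<^sup>*;
          genus = (\<lambda>C. (\<Sum>v\<in>C. g v) + card {j. j < M \<and> c (True, j) \<in> C} + 1 - card C)
      in image_mset genus (mset_set (V // E)) + G)"

text \<open>The permutation cobordism of N^{\<sqcup>n} induced by sigma in S_n, where N
  consists of K circles: circle a*K + r goes to circle (sigma a)*K + r.\<close>

definition block_perm :: "nat \<Rightarrow> (nat \<Rightarrow> nat) \<Rightarrow> nat \<Rightarrow> nat" where
  "block_perm K \<sigma> j = \<sigma> (j div K) * K + j mod K"

text \<open>alpha(cl(h \<circ> e^-_{N,n})) for N = K circles and h = (c,g,G).\<close>

definition antisym_closure_value ::
  "(nat \<Rightarrow> 'k::comm_ring_1) \<Rightarrow> nat \<Rightarrow> nat \<Rightarrow> (bool \<times> nat \<Rightarrow> nat) \<Rightarrow> (nat \<Rightarrow> nat) \<Rightarrow> nat multiset \<Rightarrow> 'k" where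
  "antisym_closure_value a K n c g G =
     (\<Sum>\<sigma>\<in>{\<sigma>. \<sigma> permutes {..<n}}.
        of_int (sign \<sigma>) * eval_closed a (closure_twist (K * n) c g G (block_perm K \<sigma>)))"

definition degree_bound :: "(nat \<Rightarrow> 'k::comm_ring_1) \<Rightarrow> nat \<Rightarrow> nat \<Rightarrow> bool" where
  "degree_bound a K d \<longleftrightarrow> (\<forall>c g G. antisym_closure_value a K (Suc d) c g G = 0)"

text \<open>deg_alpha(N) for N = K circles (meaningful when some bound exists).\<close>
definition cob_degree :: "(nat \<Rightarrow> 'k::comm_ring_1) \<Rightarrow> nat \<Rightarrow> nat" where
  "cob_degree a K = (LEAST d. degree_bound a K d)"

definition pseudocharacter :: "(nat \<Rightarrow> 'k::comm_ring_1) \<Rightarrow> bool" where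
  "pseudocharacter a \<longleftrightarrow> (\<forall>K. \<exists>d. degree_bound a K d)"

definition Z_alpha :: "(nat \<Rightarrow> 'k::comm_ring_1) \<Rightarrow> 'k fps" where
  "Z_alpha a = Abs_fps a"

end

theory Submission
  imports Defs
begin

lemma rt_iso:
  assumes "R \<subseteq> V \<times> V" "(u,v) \<in> (R \<union> R\<inverse>)\<^sup>*"
  shows "u = v \<or> (u \<in> V \<and> v \<in> V)"
  using assms(2)
proof (induction rule: rtrancl_induct)
  case base then show ?case by simp
next
  case (step y z)
  then show ?case using assms(1) by blast
qed

lemma rt_class_sub:
  assumes "R \<subseteq> V \<times> V" "w \<in> V"
  shows "(R \<union> R\<inverse>)\<^sup>* `` {w} \<subseteq> V"
  using rt_iso[OF assms(1)] assms(2) by blast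

lemma sym_rt: "(u,v) \<in> (R \<union> R\<inverse>)\<^sup>* \<Longrightarrow> (v,u) \<in> (R \<union> R\<inverse>)\<^sup>*"
  by (metis converse_Un converse_converse rtrancl_converseI sup_commute)

lemma contract_rel:
  assumes R': "R' \<subseteq> V \<times> V" and xV: "x \<in> V" and yV: "y \<in> V" and LV: "L \<notin> V"
  defines "E \<equiv> (insert (x,y) R' \<union> (insert (x,y) R')\<inverse>)\<^sup>*"
      and "E' \<equiv> (insert (x,L) (insert (L,y) R') \<union> (insert (x,L) (insert (L,y) R'))\<inverse>)\<^sup>*"
      and "f \<equiv> (\<lambda>u. if u = L then x else u)"
  shows "(u,v) \<in> E' \<longleftrightarrow> (f u, f v) \<in> E"
proof
  assume "(u,v) \<in> E'"
  then show "(f u, f v) \<in> E" unfolding E'_def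
  proof (induction rule: rtrancl_induct)
    case base then show ?case by (simp add: E_def)
  next
    case (step w z)
    have "(f w, f z) \<in> E"
    proof -
      have LR': "\<And>a b. (a,b) \<in> R' \<Longrightarrow> a \<noteq> L \<and> b \<noteq> L" using R' LV by blast
      from step(2) consider "(w,z) \<in> R'" | "(z,w) \<in> R'" | "w = x \<and> z = L" | "w = L \<and> z = x"
        | "w = L \<and> z = y" | "w = y \<and> z = L" by blast
      then show ?thesis
      proof cases
        case 1 then show ?thesis using LR'[OF 1] unfolding E_def f_def by auto
      next
        case 2 then show ?thesis using LR'[OF 2] unfolding E_def f_def by auto
      next
        case 3 then show ?thesis using LV xV unfolding E_def f_def by auto
      next
        case 4 then show ?thesis using LV xV unfolding E_def f_def by auto
      next
        case 5 then show ?thesis using LV yV unfolding E_def f_def by auto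
      next
        case 6 then show ?thesis using LV yV unfolding E_def f_def
          by (auto intro: r_into_rtrancl)
      qed
    qed
    with step(3) show ?case unfolding E_def by (meson rtrancl_trans)
  qed
next
  assume h: "(f u, f v) \<in> E"
  have sub: "E \<subseteq> E'"
  proof -
    have "insert (x,y) R' \<union> (insert (x,y) R')\<inverse> \<subseteq> E'"
    proof
      fix p assume "p \<in> insert (x,y) R' \<union> (insert (x,y) R')\<inverse>"
      then consider "p = (x,y)" | "p = (y,x)" | "p \<in> R'" | "p \<in> R'\<inverse>" by blast
      then show "p \<in> E'"
      proof cases
        case 1
        have "(x,L) \<in> E'" "(L,y) \<in> E'" unfolding E'_def by auto
        then show ?thesis using 1 unfolding E'_def by (meson rtrancl_trans)
      next
        case 2
        have "(y,L) \<in> E'" "(L,x) \<in> E'" unfolding E'_def by auto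
        then show ?thesis using 2 unfolding E'_def by (meson rtrancl_trans)
      qed (auto simp: E'_def)
    qed
    then show ?thesis unfolding E_def E'_def by (meson rtrancl_subset_rtrancl)
  qed
  have uf: "(u, f u) \<in> E'" for u unfolding E'_def f_def by auto
  have fu: "(f u, u) \<in> E'" for u unfolding E'_def f_def by auto
  from h sub have "(f u, f v) \<in> E'" by blast
  then show "(u,v) \<in> E'" using uf[of u] fu[of v] unfolding E'_def by (meson rtrancl_trans)
qed

lemma quotient_img: "A // r = (\<lambda>x. r `` {x}) ` A"
  unfolding quotient_def by blast

lemma contract_quot:
  assumes R': "R' \<subseteq> V \<times> V" and xV: "x \<in> V" and yV: "y \<in> V" and LV: "L \<notin> V"
  shows "insert L V // (insert (x,L) (insert (L,y) R') \<union> (insert (x,L) (insert (L,y) R'))\<inverse>)\<^sup>*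
     = (\<lambda>C. if x \<in> C then insert L C else C) ` (V // (insert (x,y) R' \<union> (insert (x,y) R')\<inverse>)\<^sup>*)"
    (is "_ // ?E' = ?g ` (_ // ?E)")
proof -
  define f where "f = (\<lambda>u. if u = L then x else u)"
  have rel: "(u,v) \<in> ?E' \<longleftrightarrow> (f u, f v) \<in> ?E" for u v
    using contract_rel[OF assms] unfolding f_def by blast
  have RV: "insert (x,y) R' \<subseteq> V \<times> V" using R' xV yV by blast
  have cls: "?E' `` {u} = ?g (?E `` {f u})" if "u \<in> insert L V" for u
  proof -
    have fuV: "f u \<in> V" using that xV unfolding f_def by auto
    have sub: "?E `` {f u} \<subseteq> V" by (rule rt_class_sub[OF RV fuV])
    show ?thesis
    proof (intro set_eqI iffI)
      fix v assume "v \<in> ?E' `` {u}"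
      then have "(f u, f v) \<in> ?E" using rel by blast
      then show "v \<in> ?g (?E `` {f u})" unfolding f_def by (auto split: if_splits)
    next
      fix v assume v: "v \<in> ?g (?E `` {f u})"
      have "(f u, f v) \<in> ?E"
      proof (cases "v = L")
        case True
        then have "L \<notin> ?E `` {f u}" using sub LV by blast
        with v True have "x \<in> ?E `` {f u}" by (auto split: if_splits)
        then show ?thesis using True unfolding f_def by simp
      next
        case False
        with v have "v \<in> ?E `` {f u}" by (auto split: if_splits)
        then show ?thesis using False unfolding f_def by simp
      qed
      then show "v \<in> ?E' `` {u}" using rel by blast
    qed
  qed
  have fimg: "f ` insert L V = V" using xV LV unfolding f_def by auto
  have "insert L V // ?E' = (\<lambda>u. ?E' `` {u}) ` insert L V" by (rule quotient_img)
  also have "\<dots> = (\<lambda>u. ?g (?E `` {f u})) ` insert L V" using cls by (intro image_cong) auto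
  also have "\<dots> = ?g ` ((\<lambda>w. ?E `` {w}) ` (f ` insert L V))" by (simp only: image_image)
  also have "\<dots> = ?g ` (V // ?E)" by (simp only: fimg quotient_img)
  finally show ?thesis .
qed

lemma isolated_quot:
  assumes R: "R \<subseteq> V \<times> V" and LV: "L \<notin> V"
  shows "insert L V // (insert (L,L) R \<union> (insert (L,L) R)\<inverse>)\<^sup>* = insert {L} (V // (R \<union> R\<inverse>)\<^sup>*)"
proof -
  have eq: "(insert (L,L) R \<union> (insert (L,L) R)\<inverse>)\<^sup>* = (R \<union> R\<inverse>)\<^sup>*"
  proof -
    have "insert (L,L) R \<union> (insert (L,L) R)\<inverse> = insert (L,L) (R \<union> R\<inverse>)" by auto
    moreover have "(insert (L,L) S)\<^sup>* = S\<^sup>*" for S :: "('a \<times> 'a) set"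
    proof
      show "(insert (L,L) S)\<^sup>* \<subseteq> S\<^sup>*"
      proof -
        have "insert (L,L) S \<subseteq> S\<^sup>=" by auto
        then have "(insert (L,L) S)\<^sup>* \<subseteq> (S\<^sup>=)\<^sup>*" by (rule rtrancl_mono)
        then show ?thesis by (simp add: rtrancl_reflcl)
      qed
    qed (rule rtrancl_mono, blast)
    ultimately show ?thesis by simp
  qed
  have "(R \<union> R\<inverse>)\<^sup>* `` {L} = {L}" using rt_iso[OF R] LV by blast
  then show ?thesis unfolding eq quotient_img by simp
qed

definition cV :: "nat \<Rightarrow> (bool \<times> nat \<Rightarrow> nat) \<Rightarrow> nat set" where
  "cV M c = c ` ({False, True} \<times> {..<M})"
definition cE :: "nat \<Rightarrow> (bool \<times> nat \<Rightarrow> nat) \<Rightarrow> (nat \<Rightarrow> nat) \<Rightarrow> (nat \<times> nat) set" where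
  "cE M c p = (glue_edges M c p \<union> (glue_edges M c p)\<inverse>)\<^sup>*"
definition cgen :: "nat \<Rightarrow> (bool \<times> nat \<Rightarrow> nat) \<Rightarrow> (nat \<Rightarrow> nat) \<Rightarrow> nat set \<Rightarrow> nat" where
  "cgen M c g C = (\<Sum>v\<in>C. g v) + card {j. j < M \<and> c (True, j) \<in> C} + 1 - card C"

lemma ct_alt: "closure_twist M c g G p = image_mset (cgen M c g) (mset_set (cV M c // cE M c p)) + G"
  unfolding closure_twist_def cV_def cE_def cgen_def Let_def by simp

lemma finite_cV: "finite (cV M c)" unfolding cV_def by simp

lemma cV_Suc: "cV (Suc n) c = insert (c (False, n)) (insert (c (True, n)) (cV n c))"
  unfolding cV_def lessThan_Suc by auto

lemma glue_sub:
  assumes "\<And>j. j < M \<Longrightarrow> p j < M"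
  shows "glue_edges M c p \<subseteq> cV M c \<times> cV M c"
  unfolding glue_edges_def cV_def using assms by auto

lemma class_sub:
  assumes "\<And>j. j < M \<Longrightarrow> p j < M" "C \<in> cV M c // cE M c p"
  shows "C \<subseteq> cV M c"
proof -
  from assms(2) obtain w where w: "w \<in> cV M c" "C = cE M c p `` {w}" unfolding quotient_img by auto
  show ?thesis using rt_class_sub[OF glue_sub[OF assms(1)] w(1)] w(2) unfolding cE_def by simp
qed

lemma finite_quot: "finite (cV M c // cE M c p)"
  unfolding quotient_img using finite_cV by simp

lemma cgen_out:
  assumes "c (True, n) \<notin> C"
  shows "cgen (Suc n) c g C = cgen n c g C"
proof -
  have "{j. j < Suc n \<and> c (True, j) \<in> C} = {j. j < n \<and> c (True, j) \<in> C}"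
    using assms less_Suc_eq by auto
  then show ?thesis unfolding cgen_def by simp
qed

lemma permutes_lt: "q permutes {..<n::nat} \<Longrightarrow> j < n \<Longrightarrow> q j < n"
  using permutes_in_image by fastforce

lemma ct_fixed:
  assumes cF: "c (False, n) = L" and cT: "c (True, n) = L" and LV: "L \<notin> cV n c"
    and q: "q permutes {..<n}"
  shows "closure_twist (Suc n) c g G q = add_mset (g L + 1) (closure_twist n c g G q)"
proof -
  have qn: "q n = n" using q by (simp add: permutes_def)
  have qlt: "\<And>j. j < n \<Longrightarrow> q j < n" using permutes_lt[OF q] .
  have ge: "glue_edges (Suc n) c q = insert (L,L) (glue_edges n c q)"
  proof -
    have "{(c (True, j), c (False, q j)) | j. j < Suc n}
       = insert (c (True, n), c (False, q n)) {(c (True, j), c (False, q j)) | j. j < n}"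
      using less_Suc_eq by auto
    then show ?thesis unfolding glue_edges_def using cF cT qn by simp
  qed
  have VS: "cV (Suc n) c = insert L (cV n c)" using cV_Suc cF cT by simp
  have Q: "cV (Suc n) c // cE (Suc n) c q = insert {L} (cV n c // cE n c q)"
    unfolding VS cE_def ge by (rule isolated_quot[OF glue_sub[where M=n and p=q, OF qlt] LV])
  have notin: "{L} \<notin> cV n c // cE n c q" using class_sub[where M=n and p=q, OF qlt] LV by blast
  have g1: "cgen (Suc n) c g {L} = g L + 1"
  proof -
    have "{j. j < Suc n \<and> c (True, j) \<in> {L}} = {n}"
    proof -
      have "j < n \<Longrightarrow> c (True, j) \<noteq> L" for j using LV unfolding cV_def by auto
      then show ?thesis using cT less_Suc_eq by auto
    qed
    then show ?thesis unfolding cgen_def by simp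
  qed
  have g2: "cgen (Suc n) c g C = cgen n c g C" if "C \<in> cV n c // cE n c q" for C
    using cgen_out class_sub[where M=n and p=q, OF qlt that] LV cT by blast
  have "image_mset (cgen (Suc n) c g) (mset_set (cV n c // cE n c q))
      = image_mset (cgen n c g) (mset_set (cV n c // cE n c q))"
    by (rule image_mset_cong) (use g2 finite_quot in auto)
  then show ?thesis unfolding ct_alt Q
    using notin finite_quot g1 by simp
qed

lemma sum_upd_in:
  assumes "finite C" "x \<in> C"
  shows "(\<Sum>v\<in>C. (g(x := g x + k)) v) = (\<Sum>v\<in>C. g v) + (k::nat)"
proof -
  have "(\<Sum>v\<in>C. (g(x := g x + k)) v) = (g x + k) + (\<Sum>v\<in>C - {x}. g v)"
    using assms by (simp add: sum.remove)
  also have "\<dots> = (\<Sum>v\<in>C. g v) + k" using assms by (simp add: sum.remove)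
  finally show ?thesis .
qed

lemma ct_moved:
  assumes cF: "c (False, n) = L" and cT: "c (True, n) = L" and LV: "L \<notin> cV n c"
    and q: "q permutes {..<n}" and i: "i < n"
  shows "closure_twist (Suc n) c g G (transpose n (q i) \<circ> q)
       = closure_twist n c (g(c (True, i) := g (c (True, i)) + g L)) G q"
proof -
  define x where "x = c (True, i)"
  define y where "y = c (False, q i)"
  define R' where "R' = {(c (True, j), c (False, q j)) | j. j < n \<and> j \<noteq> i}"
  define \<sigma> where "\<sigma> = transpose n (q i) \<circ> q"
  have qn: "q n = n" using q by (simp add: permutes_def)
  have qlt: "\<And>j. j < n \<Longrightarrow> q j < n" using permutes_lt[OF q] .
  have qinj: "\<And>j. j < n \<Longrightarrow> q j = q i \<Longrightarrow> j = i"
    using q i by (metis permutes_inj inj_eq)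
  have \<sigma>j: "\<sigma> j = q j" if "j < n" "j \<noteq> i" for j
    using qlt[OF that(1)] qinj[OF that(1)] that qlt[OF i] unfolding \<sigma>_def
    by (auto simp: transpose_def)
  have \<sigma>i: "\<sigma> i = n" unfolding \<sigma>_def by simp
  have \<sigma>n: "\<sigma> n = q i" unfolding \<sigma>_def using qn by simp
  have ge1: "glue_edges n c q = insert (x,y) R'"
    unfolding glue_edges_def R'_def x_def y_def using i by auto
  have ge2: "glue_edges (Suc n) c \<sigma> = insert (x,L) (insert (L,y) R')"
  proof -
    have "{(c (True, j), c (False, \<sigma> j)) | j. j < Suc n}
        = insert (c (True, i), c (False, \<sigma> i)) (insert (c (True, n), c (False, \<sigma> n))
            {(c (True, j), c (False, \<sigma> j)) | j. j < n \<and> j \<noteq> i})"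
      using i less_Suc_eq by auto
    also have "{(c (True, j), c (False, \<sigma> j)) | j. j < n \<and> j \<noteq> i} = R'"
      unfolding R'_def using \<sigma>j by metis
    finally show ?thesis unfolding glue_edges_def x_def y_def \<sigma>i \<sigma>n cF cT .
  qed
  have Vsub: "glue_edges n c q \<subseteq> cV n c \<times> cV n c" by (rule glue_sub[where M=n and p=q, OF qlt])
  have R'V: "R' \<subseteq> cV n c \<times> cV n c" and xV: "x \<in> cV n c" and yV: "y \<in> cV n c"
    using Vsub unfolding ge1 by auto
  have VS: "cV (Suc n) c = insert L (cV n c)" using cV_Suc cF cT by simp
  define gm where "gm = (\<lambda>C. if x \<in> C then insert L C else C)"
  have Q: "cV (Suc n) c // cE (Suc n) c \<sigma> = gm ` (cV n c // cE n c q)"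
    unfolding VS cE_def ge1 ge2 gm_def by (rule contract_quot[OF R'V xV yV LV])
  have inj: "inj_on gm (cV n c // cE n c q)"
  proof (rule inj_onI)
    fix C D assume C: "C \<in> cV n c // cE n c q" and D: "D \<in> cV n c // cE n c q" and e: "gm C = gm D"
    have "L \<notin> C" "L \<notin> D" using class_sub[where M=n and p=q, OF qlt C] class_sub[where M=n and p=q, OF qlt D] LV by auto
    then have "C = gm C - {L}" "D = gm D - {L}" unfolding gm_def by auto
    then show "C = D" using e by simp
  qed
  have gen: "cgen (Suc n) c g (gm C) = cgen n c (g(x := g x + g L)) C"
    if C: "C \<in> cV n c // cE n c q" for C
  proof -
    have CV: "C \<subseteq> cV n c" by (rule class_sub[where M=n and p=q, OF qlt C])
    have LC: "L \<notin> C" using CV LV by blast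
    have fC: "finite C" using CV finite_cV finite_subset by blast
    have TL: "j < n \<Longrightarrow> c (True, j) \<noteq> L" for j using LV unfolding cV_def by auto
    show ?thesis
    proof (cases "x \<in> C")
      case True
      have s: "(\<Sum>v\<in>insert L C. g v) = g L + (\<Sum>v\<in>C. g v)" using fC LC by simp
      have s2: "(\<Sum>v\<in>C. (g(x := g x + g L)) v) = (\<Sum>v\<in>C. g v) + g L"
        by (rule sum_upd_in[OF fC True])
      have cs: "{j. j < Suc n \<and> c (True, j) \<in> insert L C} = insert n {j. j < n \<and> c (True, j) \<in> C}"
        using cT TL less_Suc_eq by auto
      have cc: "card (insert L C) = Suc (card C)" using fC LC by simp
      have cn: "card (insert n {j. j < n \<and> c (True, j) \<in> C}) = Suc (card {j. j < n \<and> c (True, j) \<in> C})"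
        by simp
      show ?thesis unfolding cgen_def gm_def using True s s2 cs cc cn by simp
    next
      case False
      have "cgen (Suc n) c g C = cgen n c g C" using cgen_out LC cT by simp
      moreover have "(\<Sum>v\<in>C. (g(x := g x + g L)) v) = (\<Sum>v\<in>C. g v)"
        using False by (intro sum.cong) auto
      ultimately show ?thesis unfolding gm_def cgen_def using False by simp
    qed
  qed
  have "closure_twist (Suc n) c g G \<sigma>
      = image_mset (cgen (Suc n) c g) (mset_set (gm ` (cV n c // cE n c q))) + G"
    unfolding ct_alt Q ..
  also have "\<dots> = image_mset (cgen (Suc n) c g) (image_mset gm (mset_set (cV n c // cE n c q))) + G"
    using inj by (simp add: image_mset_mset_set)
  also have "\<dots> = image_mset (cgen n c (g(x := g x + g L))) (mset_set (cV n c // cE n c q)) + G"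
  proof -
    have "image_mset (cgen (Suc n) c g) (image_mset gm (mset_set (cV n c // cE n c q)))
        = image_mset (\<lambda>C. cgen (Suc n) c g (gm C)) (mset_set (cV n c // cE n c q))"
      by (simp add: multiset.map_comp o_def)
    also have "\<dots> = image_mset (cgen n c (g(x := g x + g L))) (mset_set (cV n c // cE n c q))"
      by (rule image_mset_cong) (use gen finite_quot in auto)
    finally show ?thesis by simp
  qed
  finally show ?thesis unfolding ct_alt \<sigma>_def x_def .
qed

lemma block_perm_1: "block_perm 1 \<sigma> = \<sigma>"
  unfolding block_perm_def by (rule ext) simp

lemma av1: "antisym_closure_value a 1 n c g G =
  (\<Sum>\<sigma>\<in>{\<sigma>. \<sigma> permutes {..<n}}. of_int (sign \<sigma>) * eval_closed a (closure_twist n c g G \<sigma>))"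
  unfolding antisym_closure_value_def block_perm_1 by simp

lemma eval_add: "eval_closed a (add_mset x M) = a x * eval_closed a M"
  unfolding eval_closed_def by simp

lemma perm_fin: assumes "q permutes {..<n::nat}" shows "permutation q"
  unfolding permutation_permutes by (intro exI[of _ "{..<n}"] conjI) (simp_all add: assms)

lemma step_L:
  assumes cF: "c (False, n) = L" and cT: "c (True, n) = L" and LV: "L \<notin> cV n c"
  shows "antisym_closure_value a 1 (Suc n) c g G =
     a (g L + 1) * antisym_closure_value a 1 n c g G
     - (\<Sum>i<n. antisym_closure_value a 1 n c (g(c (True, i) := g (c (True, i)) + g L)) G)"
proof -
  define F where "F = (\<lambda>\<sigma>. of_int (sign \<sigma>) * eval_closed a (closure_twist (Suc n) c g G \<sigma>))"
  define P where "P = {\<sigma>. \<sigma> permutes {..<n}}"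
  have "antisym_closure_value a 1 (Suc n) c g G = sum F {\<sigma>. \<sigma> permutes insert n {..<n}}"
    unfolding av1 F_def lessThan_Suc ..
  also have "\<dots> = (\<Sum>b\<in>insert n {..<n}. \<Sum>q\<in>P. F (transpose n b \<circ> q))"
    unfolding P_def by (rule sum_over_permutations_insert) auto
  also have "\<dots> = (\<Sum>q\<in>P. F (transpose n n \<circ> q)) + (\<Sum>b<n. \<Sum>q\<in>P. F (transpose n b \<circ> q))"
    by (rule sum.insert) auto
  also have "(\<lambda>q. transpose n n \<circ> q) = (\<lambda>q. q)" by (rule ext) simp
  also have "(\<Sum>q\<in>P. F q) = a (g L + 1) * antisym_closure_value a 1 n c g G"
    unfolding av1 sum_distrib_left P_def
    by (rule sum.cong) (auto simp: F_def ct_fixed[OF cF cT LV] eval_add)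
  also have "(\<Sum>b<n. \<Sum>q\<in>P. F (transpose n b \<circ> q)) = (\<Sum>q\<in>P. \<Sum>b<n. F (transpose n b \<circ> q))"
    by (rule sum.swap)
  also have "\<dots> = (\<Sum>q\<in>P. \<Sum>i<n. F (transpose n (q i) \<circ> q))"
  proof (rule sum.cong[OF refl])
    fix q assume q: "q \<in> P"
    then have qp: "q permutes {..<n}" unfolding P_def by simp
    have "(\<Sum>b<n. F (transpose n b \<circ> q)) = (\<Sum>b\<in>q ` {..<n}. F (transpose n b \<circ> q))"
      using permutes_image[OF qp] by simp
    also have "\<dots> = (\<Sum>i<n. F (transpose n (q i) \<circ> q))"
      using permutes_inj_on[OF qp] by (simp add: sum.reindex)
    finally show "(\<Sum>b<n. F (transpose n b \<circ> q)) = (\<Sum>i<n. F (transpose n (q i) \<circ> q))" .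
  qed
  also have "\<dots> = (\<Sum>q\<in>P. \<Sum>i<n. - (of_int (sign q) *
       eval_closed a (closure_twist n c (g(c (True, i) := g (c (True, i)) + g L)) G q)))"
  proof (intro sum.cong refl)
    fix q i assume q: "q \<in> P" and i: "i \<in> {..<n}"
    then have qp: "q permutes {..<n}" and il: "i < n" unfolding P_def by auto
    have "q i < n" using permutes_lt[OF qp il] .
    then have "sign (transpose n (q i) \<circ> q) = - sign q"
      by (simp add: sign_compose permutation_swap_id perm_fin[OF qp] sign_swap_id)
    then show "F (transpose n (q i) \<circ> q) = - (of_int (sign q) *
       eval_closed a (closure_twist n c (g(c (True, i) := g (c (True, i)) + g L)) G q))"
      unfolding F_def ct_moved[OF cF cT LV qp il] by simp
  qed
  also have "\<dots> = - (\<Sum>i<n. antisym_closure_value a 1 n c (g(c (True, i) := g (c (True, i)) + g L)) G)"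
    unfolding av1 P_def sum_negf by (subst sum.swap) simp
  finally show ?thesis by simp
qed

lemma ct_swap:
  assumes pi: "\<pi> permutes {..<n::nat}"
  shows "closure_twist n (\<lambda>(b,j). c (b, \<pi> j)) g G \<sigma> = closure_twist n c g G (\<pi> \<circ> \<sigma> \<circ> inv \<pi>)"
proof -
  define c' where "c' = (\<lambda>(b,j). c (b, \<pi> j))"
  have img: "\<pi> ` {..<n} = {..<n}" using permutes_image[OF pi] .
  have piinv: "\<pi> (inv \<pi> k) = k" for k using permutes_inverses(1)[OF pi] .
  have invlt: "k < n \<Longrightarrow> inv \<pi> k < n" for k using permutes_lt[OF permutes_inv[OF pi]] .
  have V: "cV n c' = cV n c"
  proof -
    have "c' ` ({False,True} \<times> {..<n}) = c ` ({False,True} \<times> \<pi> ` {..<n})"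
    proof (intro set_eqI iffI)
      fix v assume "v \<in> c' ` ({False,True} \<times> {..<n})"
      then obtain b j where "j < n" "v = c (b, \<pi> j)" unfolding c'_def by auto
      then show "v \<in> c ` ({False,True} \<times> \<pi> ` {..<n})" by (cases b) auto
    next
      fix v assume "v \<in> c ` ({False,True} \<times> \<pi> ` {..<n})"
      then obtain b j where "j < n" "v = c (b, \<pi> j)" by auto
      then have "v = c' (b, j)" unfolding c'_def by simp
      then show "v \<in> c' ` ({False,True} \<times> {..<n})" using \<open>j < n\<close> by (cases b) auto
    qed
    then show ?thesis unfolding cV_def img .
  qed
  have GE: "glue_edges n c' \<sigma> = glue_edges n c (\<pi> \<circ> \<sigma> \<circ> inv \<pi>)"
  proof -
    have "{(c' (True, j), c' (False, \<sigma> j)) | j. j < n} = {(c (True, k), c (False, (\<pi> \<circ> \<sigma> \<circ> inv \<pi>) k)) | k. k < n}"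
    proof (intro set_eqI iffI)
      fix e assume "e \<in> {(c' (True, j), c' (False, \<sigma> j)) | j. j < n}"
      then obtain j where j: "j < n" "e = (c (True, \<pi> j), c (False, \<pi> (\<sigma> j)))" unfolding c'_def by auto
      have A: "inv \<pi> (\<pi> j) = j" using permutes_inverses(2)[OF pi] .
      have B: "\<pi> j < n" using permutes_lt[OF pi j(1)] .
      show "e \<in> {(c (True, k), c (False, (\<pi> \<circ> \<sigma> \<circ> inv \<pi>) k)) | k. k < n}"
        unfolding mem_Collect_eq by (rule exI[of _ "\<pi> j"]) (use j A B in simp)
    next
      fix e assume "e \<in> {(c (True, k), c (False, (\<pi> \<circ> \<sigma> \<circ> inv \<pi>) k)) | k. k < n}"
      then obtain k where k: "k < n" "e = (c (True, k), c (False, \<pi> (\<sigma> (inv \<pi> k))))" by auto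
      show "e \<in> {(c' (True, j), c' (False, \<sigma> j)) | j. j < n}"
        unfolding mem_Collect_eq by (rule exI[of _ "inv \<pi> k"]) (use k invlt[OF k(1)] piinv[of k] in \<open>simp add: c'_def\<close>)
    qed
    then show ?thesis unfolding glue_edges_def .
  qed
  have GN: "cgen n c' g C = cgen n c g C" for C
  proof -
    define A where "A = {j. j < n \<and> c' (True, j) \<in> C}"
    have A': "{k. k < n \<and> c (True, k) \<in> C} = \<pi> ` A"
    proof (intro set_eqI iffI)
      fix k assume k: "k \<in> {k. k < n \<and> c (True, k) \<in> C}"
      then have kn: "k < n" and kc: "c (True, k) \<in> C" by auto
      have "inv \<pi> k \<in> A" unfolding A_def c'_def using invlt[OF kn] piinv[of k] kc by simp
      then show "k \<in> \<pi> ` A" by (rule rev_image_eqI) (simp add: piinv)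
    next
      fix k assume "k \<in> \<pi> ` A"
      then obtain j where j: "j \<in> A" "k = \<pi> j" by blast
      then have "j < n" "c (True, \<pi> j) \<in> C" unfolding A_def c'_def by auto
      then show "k \<in> {k. k < n \<and> c (True, k) \<in> C}" using j(2) permutes_lt[OF pi] by simp
    qed
    have "inj_on \<pi> A" using permutes_inj[OF pi] by (rule inj_on_subset) simp
    then have "card {k. k < n \<and> c (True, k) \<in> C} = card A" unfolding A' by (rule card_image)
    then show ?thesis unfolding cgen_def A_def by simp
  qed
  have GN': "cgen n c' g = cgen n c g" using GN by (rule ext)
  have "closure_twist n c' g G \<sigma> = closure_twist n c g G (\<pi> \<circ> \<sigma> \<circ> inv \<pi>)"
    unfolding ct_alt cE_def V GE GN' ..
  then show ?thesis unfolding c'_def .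
qed


lemma av_swap:
  assumes pi: "\<pi> permutes {..<n::nat}"
  shows "antisym_closure_value a 1 n (\<lambda>(b,j). c (b, \<pi> j)) g G = antisym_closure_value a 1 n c g G"
proof -
  define F where "F = (\<lambda>\<tau>. eval_closed a (closure_twist n c g G \<tau>))"
  have "antisym_closure_value a 1 n (\<lambda>(b,j). c (b, \<pi> j)) g G
      = (\<Sum>\<sigma>\<in>{\<sigma>. \<sigma> permutes {..<n}}. of_int (sign \<sigma>) * F (\<pi> \<circ> \<sigma> \<circ> inv \<pi>))"
    unfolding av1 F_def ct_swap[OF pi] ..
  also have "\<dots> = (\<Sum>\<tau>\<in>{\<sigma>. \<sigma> permutes {..<n}}. of_int (sign \<tau>) * F \<tau>)"
  proof (rule sum.reindex_bij_witness[of _ "\<lambda>\<tau>. inv \<pi> \<circ> \<tau> \<circ> \<pi>" "\<lambda>\<sigma>. \<pi> \<circ> \<sigma> \<circ> inv \<pi>"])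
    have pinv: "inv \<pi> permutes {..<n}" using permutes_inv[OF pi] .
    have i1: "\<pi> \<circ> inv \<pi> = id" "inv \<pi> \<circ> \<pi> = id" using permutes_inv_o[OF pi] by auto
    fix \<sigma> assume "\<sigma> \<in> {\<sigma>. \<sigma> permutes {..<n}}"
    then have s: "\<sigma> permutes {..<n}" by simp
    show "inv \<pi> \<circ> (\<pi> \<circ> \<sigma> \<circ> inv \<pi>) \<circ> \<pi> = \<sigma>"
      by (simp add: o_assoc[symmetric]) (simp add: o_assoc i1)
    show "\<pi> \<circ> \<sigma> \<circ> inv \<pi> \<in> {\<sigma>. \<sigma> permutes {..<n}}"
      using s pi pinv by (simp add: permutes_compose)
    have "sign (\<pi> \<circ> \<sigma> \<circ> inv \<pi>) = sign \<sigma>"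
      using perm_fin[OF pi] perm_fin[OF s] perm_fin[OF pinv]
      by (simp add: sign_compose permutation_compose sign_inverse)
    then show "of_int (sign (\<pi> \<circ> \<sigma> \<circ> inv \<pi>)) * F (\<pi> \<circ> \<sigma> \<circ> inv \<pi>) = of_int (sign \<sigma>) * F (\<pi> \<circ> \<sigma> \<circ> inv \<pi>)"
      by simp
  next
    have pinv: "inv \<pi> permutes {..<n}" using permutes_inv[OF pi] .
    have i1: "\<pi> \<circ> inv \<pi> = id" "inv \<pi> \<circ> \<pi> = id" using permutes_inv_o[OF pi] by auto
    fix \<tau> assume "\<tau> \<in> {\<sigma>. \<sigma> permutes {..<n}}"
    then have t: "\<tau> permutes {..<n}" by simp
    show "\<pi> \<circ> (inv \<pi> \<circ> \<tau> \<circ> \<pi>) \<circ> inv \<pi> = \<tau>"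
      by (simp add: o_assoc[symmetric]) (simp add: o_assoc i1)
    show "inv \<pi> \<circ> \<tau> \<circ> \<pi> \<in> {\<sigma>. \<sigma> permutes {..<n}}"
      using t pi pinv by (simp add: permutes_compose)
  qed
  also have "\<dots> = antisym_closure_value a 1 n c g G" unfolding av1 F_def ..
  finally show ?thesis .
qed

fun Phi :: "(nat \<Rightarrow> 'k::comm_ring_1) \<Rightarrow> nat \<Rightarrow> (nat \<Rightarrow> nat) \<Rightarrow> 'k" where
  "Phi a 0 \<gamma> = 1"
| "Phi a (Suc n) \<gamma> = a (\<gamma> n + 1) * Phi a n \<gamma> - (\<Sum>i<n. Phi a n (\<gamma>(i := \<gamma> i + \<gamma> n)))"

lemma Phi_cong: "(\<And>j. j < n \<Longrightarrow> \<gamma> j = \<gamma>' j) \<Longrightarrow> Phi a n \<gamma> = Phi a n \<gamma>'"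
proof (induction n arbitrary: \<gamma> \<gamma>')
  case 0 then show ?case by simp
next
  case (Suc n)
  have e1: "Phi a n \<gamma> = Phi a n \<gamma>'" by (rule Suc.IH) (use Suc.prems in auto)
  have e2: "Phi a n (\<gamma>(i := \<gamma> i + \<gamma> n)) = Phi a n (\<gamma>'(i := \<gamma>' i + \<gamma>' n))" if "i < n" for i
    by (rule Suc.IH) (use Suc.prems that in auto)
  show ?case using e1 e2 Suc.prems by simp
qed

lemma av_zero: "antisym_closure_value a 1 0 c g {#} = 1"
proof -
  have "{\<sigma>. \<sigma> permutes {..<(0::nat)}} = {id}" by (auto simp: permutes_empty)
  moreover have "closure_twist 0 c g {#} id = {#}" unfolding ct_alt cV_def by simp
  ultimately show ?thesis unfolding av1 by (simp add: eval_closed_def)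
qed

lemma cyl_Phi:
  assumes "inj_on l {..<n}"
  shows "antisym_closure_value a 1 n (\<lambda>(b,j). l j) g {#} = Phi a n (g \<circ> l)"
  using assms
proof (induction n arbitrary: g)
  case 0 then show ?case using av_zero by simp
next
  case (Suc n)
  have inj: "inj_on l {..<n}" using Suc.prems by (rule inj_on_subset) auto
  define c :: "bool \<times> nat \<Rightarrow> nat" where "c = (\<lambda>(b,j). l j)"
  have LV: "l n \<notin> cV n c"
  proof
    assume "l n \<in> cV n c"
    then obtain b j where "j < n" "l n = l j" unfolding cV_def c_def by auto
    then show False using Suc.prems unfolding inj_on_def by (metis lessThan_iff less_Suc_eq less_irrefl)
  qed
  have st: "antisym_closure_value a 1 (Suc n) c g {#} =
     a (g (l n) + 1) * antisym_closure_value a 1 n c g {#}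
     - (\<Sum>i<n. antisym_closure_value a 1 n c (g(c (True, i) := g (c (True, i)) + g (l n))) {#})"
    by (rule step_L) (use LV in \<open>auto simp: c_def\<close>)
  have t: "antisym_closure_value a 1 n c (g(l i := g (l i) + g (l n))) {#}
      = Phi a n ((g \<circ> l)(i := (g \<circ> l) i + (g \<circ> l) n))" if i: "i < n" for i
  proof -
    have "antisym_closure_value a 1 n c (g(l i := g (l i) + g (l n))) {#}
       = Phi a n ((g(l i := g (l i) + g (l n))) \<circ> l)" unfolding c_def by (rule Suc.IH[OF inj])
    also have "\<dots> = Phi a n ((g \<circ> l)(i := (g \<circ> l) i + (g \<circ> l) n))"
    proof (rule Phi_cong)
      fix j assume j: "j < n"
      have "l j = l i \<longleftrightarrow> j = i" using inj j i unfolding inj_on_def by auto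
      then show "(g(l i := g (l i) + g (l n)) \<circ> l) j = ((g \<circ> l)(i := (g \<circ> l) i + (g \<circ> l) n)) j"
        by simp
    qed
    finally show ?thesis .
  qed
  have IHn: "antisym_closure_value a 1 n c g {#} = Phi a n (g \<circ> l)" unfolding c_def by (rule Suc.IH[OF inj])
  have cT: "\<And>i. c (True, i) = l i" by (simp add: c_def)
  have "antisym_closure_value a 1 (Suc n) c g {#} = a (g (l n) + 1) * Phi a n (g \<circ> l)
      - (\<Sum>i<n. Phi a n ((g \<circ> l)(i := (g \<circ> l) i + (g \<circ> l) n)))"
    unfolding st cT IHn using t by (intro arg_cong2[where f="(-)"] refl sum.cong) auto
  also have "\<dots> = Phi a (Suc n) (g \<circ> l)" by (simp only: Phi.simps comp_apply)
  finally show ?case unfolding c_def .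
qed

lemma Phi_sym:
  assumes pi: "\<pi> permutes {..<n}"
  shows "Phi a n (\<gamma> \<circ> \<pi>) = Phi a n \<gamma>"
proof -
  have injp: "inj_on \<pi> {..<n}" using permutes_inj_on[OF pi] .
  have "Phi a n (\<gamma> \<circ> \<pi>) = antisym_closure_value a 1 n (\<lambda>(b,j). \<pi> j) \<gamma> {#}"
    by (rule cyl_Phi[OF injp, symmetric])
  also have "(\<lambda>(b,j). \<pi> j) = (\<lambda>(b,j). (\<lambda>(b::bool,j::nat). j) (b, \<pi> j))" by simp
  also have "antisym_closure_value a 1 n \<dots> \<gamma> {#} = antisym_closure_value a 1 n (\<lambda>(b::bool,j::nat). j) \<gamma> {#}"
    by (rule av_swap[OF pi])
  also have "\<dots> = Phi a n (\<gamma> \<circ> id)"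
    using cyl_Phi[of id n a \<gamma>] by simp
  finally show ?thesis by (simp add: comp_def)
qed


lemma ct_cong:
  assumes c: "\<And>b j. j < n \<Longrightarrow> c (b,j) = c' (b,j)" and g: "\<And>v. v \<in> cV n c \<Longrightarrow> g v = g' v"
    and sg: "\<And>j. j < n \<Longrightarrow> \<sigma> j < n"
  shows "closure_twist n c g G \<sigma> = closure_twist n c' g' G \<sigma>"
proof -
  have V: "cV n c = cV n c'" unfolding cV_def by (rule image_cong) (auto simp: c)
  have pe: "(c (True,j), c (False, \<sigma> j)) = (c' (True,j), c' (False, \<sigma> j))" if "j < n" for j
    using c[OF that] c[OF sg[OF that]] by simp
  have E: "glue_edges n c \<sigma> = glue_edges n c' \<sigma>" unfolding glue_edges_def
  proof (intro set_eqI iffI)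
    fix x assume "x \<in> {(c (True, j), c (False, \<sigma> j)) | j. j < n}"
    then obtain j where "j < n" "x = (c (True, j), c (False, \<sigma> j))" by blast
    then show "x \<in> {(c' (True, j), c' (False, \<sigma> j)) | j. j < n}" using pe by blast
  next
    fix x assume "x \<in> {(c' (True, j), c' (False, \<sigma> j)) | j. j < n}"
    then obtain j where j: "j < n" "x = (c' (True, j), c' (False, \<sigma> j))" by blast
    then have "x = (c (True, j), c (False, \<sigma> j))" using pe[OF j(1)] by simp
    then show "x \<in> {(c (True, j), c (False, \<sigma> j)) | j. j < n}" using j(1) by blast
  qed
  have "cgen n c g C = cgen n c' g' C" if C: "C \<in> cV n c // cE n c \<sigma>" for C
  proof -
    have CV: "C \<subseteq> cV n c" by (rule class_sub[OF sg C])
    have "(\<Sum>v\<in>C. g v) = (\<Sum>v\<in>C. g' v)" using CV g by (intro sum.cong) auto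
    moreover have "{j. j < n \<and> c (True, j) \<in> C} = {j. j < n \<and> c' (True, j) \<in> C}" using c by auto
    ultimately show ?thesis unfolding cgen_def by simp
  qed
  then have "image_mset (cgen n c g) (mset_set (cV n c // cE n c \<sigma>))
      = image_mset (cgen n c' g') (mset_set (cV n c // cE n c \<sigma>))"
    by (intro image_mset_cong) (use finite_quot in auto)
  then show ?thesis unfolding ct_alt by (simp add: V cE_def E)
qed

lemma av_cong:
  assumes c: "\<And>b j. j < n \<Longrightarrow> c (b,j) = c' (b,j)" and g: "\<And>v. v \<in> cV n c \<Longrightarrow> g v = g' v"
  shows "antisym_closure_value a 1 n c g G = antisym_closure_value a 1 n c' g' G"
  unfolding av1
proof (rule sum.cong[OF refl])
  fix \<sigma> assume "\<sigma> \<in> {\<sigma>. \<sigma> permutes {..<n}}"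
  then have s: "\<And>j. j < n \<Longrightarrow> \<sigma> j < n" using permutes_lt by blast
  have "closure_twist n c g G \<sigma> = closure_twist n c' g' G \<sigma>"
    by (rule ct_cong[of n c c' g g' \<sigma> G]) (use c g s in auto)
  then show "of_int (sign \<sigma>) * eval_closed a (closure_twist n c g G \<sigma>) =
         of_int (sign \<sigma>) * eval_closed a (closure_twist n c' g' G \<sigma>)" by simp
qed

lemma descent:
  fixes a :: "nat \<Rightarrow> 'k::idom"
  assumes b: "degree_bound a 1 (Suc d)" and ne: "a 1 \<noteq> of_nat (Suc d)"
  shows "degree_bound a 1 d"
  unfolding degree_bound_def
proof (intro allI)
  fix c :: "bool \<times> nat \<Rightarrow> nat" and g :: "nat \<Rightarrow> nat" and G :: "nat multiset"
  define n where "n = Suc d"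
  obtain L where LV: "L \<notin> cV n c" using ex_new_if_finite[OF infinite_UNIV_nat finite_cV] by blast
  define c2 where "c2 = c((False,n) := L, (True,n) := L)"
  define g2 where "g2 = g(L := 0)"
  have c2a: "\<And>b j. j < n \<Longrightarrow> c2 (b,j) = c (b,j)" unfolding c2_def by auto
  have V2: "cV n c2 = cV n c" unfolding cV_def using c2a by (intro image_cong) auto
  have g2a: "\<And>v. v \<in> cV n c2 \<Longrightarrow> g2 v = g v" unfolding g2_def using LV V2 by auto
  have e0: "antisym_closure_value a 1 n c2 g2 G = antisym_closure_value a 1 n c g G"
    by (rule av_cong) (use c2a g2a in auto)
  have st: "antisym_closure_value a 1 (Suc n) c2 g2 G =
     a (g2 L + 1) * antisym_closure_value a 1 n c2 g2 G
     - (\<Sum>i<n. antisym_closure_value a 1 n c2 (g2(c2 (True, i) := g2 (c2 (True, i)) + g2 L)) G)"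
    by (rule step_L) (use LV V2 in \<open>auto simp: c2_def\<close>)
  have "g2 L = 0" unfolding g2_def by simp
  then have "antisym_closure_value a 1 (Suc n) c2 g2 G = (a 1 - of_nat n) * antisym_closure_value a 1 n c g G"
    using st e0 by (simp add: algebra_simps)
  moreover have "antisym_closure_value a 1 (Suc n) c2 g2 G = 0" using b unfolding degree_bound_def n_def by blast
  ultimately have "(a 1 - of_nat n) * antisym_closure_value a 1 n c g G = 0" by simp
  moreover have "a 1 - of_nat n \<noteq> 0" using ne unfolding n_def by simp
  ultimately show "antisym_closure_value a 1 (Suc d) c g G = 0" unfolding n_def by simp
qed

lemma Phi_zero: "Phi a n (\<lambda>_. 0) = (\<Prod>i<n. a 1 - of_nat i)"
proof (induction n)
  case 0 then show ?case by simp
next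
  case (Suc n)
  have "Phi a n ((\<lambda>_. 0::nat)(i := 0 + 0)) = Phi a n (\<lambda>_. 0)" for i by (rule Phi_cong) auto
  then have "Phi a (Suc n) (\<lambda>_. 0) = a 1 * Phi a n (\<lambda>_. 0) - of_nat n * Phi a n (\<lambda>_. 0)" by simp
  then show ?case using Suc by (simp add: algebra_simps)
qed

lemma bound_Phi:
  assumes "degree_bound a 1 d"
  shows "Phi a (Suc d) \<gamma> = 0"
proof -
  have "Phi a (Suc d) (\<gamma> \<circ> id) = antisym_closure_value a 1 (Suc d) (\<lambda>(b,j). id j) \<gamma> {#}"
    by (rule cyl_Phi[symmetric]) simp
  also have "\<dots> = 0" using assms unfolding degree_bound_def by blast
  finally show ?thesis by simp
qed


lemma cob_degree_main:
  fixes a :: "nat \<Rightarrow> 'k::field_char_0"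
  assumes "pseudocharacter a"
  obtains D where "a 1 = of_nat D" "degree_bound a 1 D" "cob_degree a 1 = D"
proof -
  obtain d0 where b0: "degree_bound a 1 d0" using assms unfolding pseudocharacter_def by blast
  have "(\<Prod>i<Suc d0. a 1 - of_nat i) = 0" using bound_Phi[OF b0, of "\<lambda>_. 0"] unfolding Phi_zero .
  then obtain D where D: "D < Suc d0" "a 1 - of_nat D = 0" by (metis lessThan_iff prod_zero_iff finite_lessThan)
  then have D2: "a 1 = of_nat D" by simp
  have down: "degree_bound a 1 d \<Longrightarrow> D \<le> d \<Longrightarrow> degree_bound a 1 D" for d
  proof (induction d)
    case 0 then show ?case by simp
  next
    case (Suc d)
    show ?case
    proof (cases "D = Suc d")
      case True then show ?thesis using Suc by simp
    next
      case False
      then have "(of_nat D :: 'k) \<noteq> of_nat (Suc d)" by (metis of_nat_eq_iff)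
      then have "a 1 \<noteq> of_nat (Suc d)" using D2 by simp
      then have "degree_bound a 1 d" by (rule descent[OF Suc.prems(1)])
      then show ?thesis using Suc False by simp
    qed
  qed
  have bD: "degree_bound a 1 D" using down[OF b0] D(1) by simp
  have lower: "D \<le> d" if "degree_bound a 1 d" for d
  proof (rule ccontr)
    assume "\<not> D \<le> d"
    have "a 1 - of_nat i \<noteq> 0" if "i < Suc d" for i
    proof -
      have "D \<noteq> i" using that \<open>\<not> D \<le> d\<close> by simp
      then have "(of_nat D :: 'k) \<noteq> of_nat i" by (metis of_nat_eq_iff)
      then show ?thesis using D2 by simp
    qed
    then have "(\<Prod>i<Suc d. a 1 - of_nat i) \<noteq> 0" by (subst prod_zero_iff) auto
    then show False using bound_Phi[OF that, of "\<lambda>_. 0"] unfolding Phi_zero by blast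
  qed
  have "cob_degree a 1 = D" unfolding cob_degree_def
    by (rule Least_equality) (use bD lower in auto)
  then show ?thesis using that D2 bD by blast
qed

definition fP :: "(nat \<Rightarrow> 'k::comm_ring_1) \<Rightarrow> nat \<Rightarrow> 'k" where
  "fP a n = Phi a n (\<lambda>_. 1)"
definition HP :: "(nat \<Rightarrow> 'k::comm_ring_1) \<Rightarrow> nat \<Rightarrow> nat \<Rightarrow> 'k" where
  "HP a n x = Phi a (Suc n) (\<lambda>j. if j < n then 1 else x)"

lemma HP0: "HP a 0 x = a (x + 1)"
  unfolding HP_def by simp

lemma fP0: "fP a 0 = 1" unfolding fP_def by simp

lemma fP_Suc: "fP a (Suc n) = HP a n 1"
  unfolding fP_def HP_def by (rule Phi_cong) simp

lemma HP_Suc: "HP a (Suc n) x = a (x + 1) * fP a (Suc n) - of_nat (Suc n) * HP a n (x + 1)"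
proof -
  define \<gamma> where "\<gamma> = (\<lambda>j. if j < Suc n then 1 else x)"
  have g1: "Phi a (Suc n) \<gamma> = fP a (Suc n)" unfolding fP_def \<gamma>_def by (rule Phi_cong) simp
  have g2: "Phi a (Suc n) (\<gamma>(i := \<gamma> i + \<gamma> (Suc n))) = HP a n (x + 1)" if i: "i < Suc n" for i
  proof -
    define \<delta> where "\<delta> = \<gamma>(i := \<gamma> i + \<gamma> (Suc n))"
    define \<pi> where "\<pi> = transpose i n"
    have pi: "\<pi> permutes {..<Suc n}" unfolding \<pi>_def by (rule permutes_swap_id) (use i in auto)
    have "Phi a (Suc n) \<delta> = Phi a (Suc n) (\<delta> \<circ> \<pi>)" by (rule Phi_sym[OF pi, symmetric])
    also have "\<dots> = HP a n (x + 1)" unfolding HP_def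
    proof (rule Phi_cong)
      fix j assume j: "j < Suc n"
      show "(\<delta> \<circ> \<pi>) j = (if j < n then 1 else x + 1)"
        using i j unfolding \<delta>_def \<gamma>_def \<pi>_def by (auto simp: transpose_def)
    qed
    finally show ?thesis unfolding \<delta>_def .
  qed
  have "HP a (Suc n) x = Phi a (Suc (Suc n)) \<gamma>" unfolding HP_def \<gamma>_def ..
  also have "\<dots> = a (\<gamma> (Suc n) + 1) * Phi a (Suc n) \<gamma> - (\<Sum>i<Suc n. Phi a (Suc n) (\<gamma>(i := \<gamma> i + \<gamma> (Suc n))))"
    by (simp only: Phi.simps)
  also have "\<dots> = a (x + 1) * fP a (Suc n) - (\<Sum>i<Suc n. HP a n (x + 1))"
    using g1 g2 by (simp add: \<gamma>_def)
  also have "\<dots> = a (x + 1) * fP a (Suc n) - of_nat (Suc n) * HP a n (x + 1)" by simp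
  finally show ?thesis .
qed

definition eP :: "(nat \<Rightarrow> 'k::field_char_0) \<Rightarrow> nat \<Rightarrow> 'k" where
  "eP a n = fP a n / fact n"
definition hP :: "(nat \<Rightarrow> 'k::field_char_0) \<Rightarrow> nat \<Rightarrow> nat \<Rightarrow> 'k" where
  "hP a n x = HP a n x / fact n"

lemma aux1: "(N::'k::field) \<noteq> 0 \<Longrightarrow> F \<noteq> 0 \<Longrightarrow> (A*B - N*C)/(N*F) = A*(B/(N*F)) - C/F"
  by (simp add: field_simps)
lemma aux2: "(N::'k::field) \<noteq> 0 \<Longrightarrow> F \<noteq> 0 \<Longrightarrow> N*(C/(N*F)) = C/F"
  by (simp add: field_simps)

lemma hP_Suc:
  fixes a :: "nat \<Rightarrow> 'k::field_char_0"
  shows "hP a (Suc n) x = a (x + 1) * eP a (Suc n) - hP a n (x + 1)"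
proof -
  have f: "(fact (Suc n) :: 'k) = of_nat (Suc n) * fact n" by simp
  have nz: "(fact n :: 'k) \<noteq> 0" "(of_nat (Suc n) :: 'k) \<noteq> 0"
    by simp (metis of_nat_eq_0_iff nat.distinct(1))
  show ?thesis unfolding hP_def eP_def HP_Suc f by (rule aux1[OF nz(2) nz(1)])
qed

lemma hP_closed: "hP a n x = (\<Sum>j\<le>n. (-1)^j * a (x + j + 1) * eP a (n - j))"
proof (induction n arbitrary: x)
  case 0 then show ?case by (simp add: hP_def eP_def HP0 fP0)
next
  case (Suc n)
  have "(\<Sum>j\<le>Suc n. (-1)^j * a (x + j + 1) * eP a (Suc n - j))
      = a (x + 1) * eP a (Suc n) + (\<Sum>j\<le>n. (-1)^(Suc j) * a (x + Suc j + 1) * eP a (Suc n - Suc j))"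
    by (subst sum.atMost_Suc_shift) simp
  also have "(\<Sum>j\<le>n. (-1)^(Suc j) * a (x + Suc j + 1) * eP a (Suc n - Suc j))
      = - (\<Sum>j\<le>n. (-1)^j * a ((x + 1) + j + 1) * eP a (n - j))"
    by (simp add: sum_negf[symmetric])
  finally show ?case using Suc.IH[of "x+1"] by (simp add: hP_Suc)
qed

lemma newton:
  fixes a :: "nat \<Rightarrow> 'k::field_char_0"
  shows "of_nat (Suc n) * eP a (Suc n) = hP a n 1"
proof -
  have f: "(fact (Suc n) :: 'k) = of_nat (Suc n) * fact n" by simp
  have nz: "(fact n :: 'k) \<noteq> 0" "(of_nat (Suc n) :: 'k) \<noteq> 0"
    by simp (metis of_nat_eq_0_iff nat.distinct(1))
  show ?thesis unfolding hP_def eP_def fP_Suc f by (rule aux2[OF nz(2) nz(1)])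
qed

lemma vanish:
  fixes a :: "nat \<Rightarrow> 'k::field_char_0"
  assumes "degree_bound a 1 D"
  shows "hP a D x = 0"
  unfolding hP_def HP_def by (simp only: bound_Phi[OF assms]) simp

lemma neg1_diff: "j \<le> n \<Longrightarrow> (-1::'k::comm_ring_1)^(n - j) = (-1)^n * (-1)^j"
  by (simp add: neg_one_power_add_eq_neg_one_power_diff[symmetric] power_add)

lemma key_coeff:
  fixes a :: "nat \<Rightarrow> 'k::field_char_0"
  assumes a1: "a 1 = of_nat D" and van: "\<And>x. hP a D x = 0"
  defines "r \<equiv> (\<lambda>k. if k \<le> D then (-1)^k * eP a k else 0)"
  shows "(\<Sum>i=0..N. r i * a (N - i + 1)) = (of_nat D - of_nat N) * r N"
proof (cases "D \<le> N")
  case True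
  then obtain x where N: "N = D + x" using le_Suc_ex by blast
  have "(\<Sum>i=0..N. r i * a (N - i + 1)) = (\<Sum>i=0..D. r i * a (N - i + 1))"
    by (rule sum.mono_neutral_right) (use True in \<open>auto simp: r_def\<close>)
  also have "\<dots> = (\<Sum>i=0..D. (-1)^i * eP a i * a (x + D - i + 1))"
    by (rule sum.cong) (auto simp: r_def N algebra_simps)
  also have "\<dots> = (\<Sum>j=0..D. (-1)^(D - j) * eP a (D - j) * a (x + j + 1))"
    by (subst sum.atLeastAtMost_rev) (rule sum.cong, auto)
  also have "\<dots> = (-1)^D * (\<Sum>j=0..D. (-1)^j * a (x + j + 1) * eP a (D - j))"
    unfolding sum_distrib_left by (rule sum.cong) (auto simp: neg1_diff mult_ac)
  also have "\<dots> = (-1)^D * hP a D x" unfolding hP_closed atMost_atLeast0 ..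
  also have "\<dots> = 0" by (simp add: van)
  finally have l: "(\<Sum>i=0..N. r i * a (N - i + 1)) = 0" by simp
  have "(of_nat D - of_nat N) * r N = (0::'k)"
    using True by (cases "N = D") (auto simp: r_def)
  then show ?thesis using l by simp
next
  case False
  then have ND: "N < D" by simp
  have l1: "(\<Sum>i=0..N. r i * a (N - i + 1)) = (\<Sum>i=0..N. (-1)^i * eP a i * a (N - i + 1))"
    by (rule sum.cong) (use ND in \<open>auto simp: r_def\<close>)
  show ?thesis
  proof (cases N)
    case 0
    then show ?thesis using l1 a1 ND by (simp add: r_def eP_def fP0)
  next
    case (Suc n)
    have nw: "of_nat (Suc n) * eP a (Suc n) = (\<Sum>j=0..n. (-1)^j * a (1 + j + 1) * eP a (n - j))"
      unfolding newton hP_closed atMost_atLeast0 ..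
    have "(\<Sum>i=0..N. (-1)^i * eP a i * a (N - i + 1))
       = (\<Sum>i=0..n. (-1)^i * eP a i * a (Suc n - i + 1)) + (-1)^(Suc n) * eP a (Suc n) * a 1"
      unfolding Suc by (simp add: sum.atLeast0_atMost_Suc)
    also have "(\<Sum>i=0..n. (-1)^i * eP a i * a (Suc n - i + 1))
        = (\<Sum>j=0..n. (-1)^(n - j) * eP a (n - j) * a (Suc j + 1))"
      by (subst sum.atLeastAtMost_rev) (rule sum.cong, auto simp: Suc_diff_le)
    also have "\<dots> = (-1)^n * (\<Sum>j=0..n. (-1)^j * a (1 + j + 1) * eP a (n - j))"
      unfolding sum_distrib_left by (rule sum.cong) (auto simp: neg1_diff mult_ac)
    also have "\<dots> = (-1)^n * (of_nat (Suc n) * eP a (Suc n))" unfolding nw ..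
    finally have l2: "(\<Sum>i=0..N. (-1)^i * eP a i * a (N - i + 1))
       = (-1)^n * (of_nat (Suc n) * eP a (Suc n)) + (-1)^(Suc n) * eP a (Suc n) * of_nat D"
      using a1 by simp
    have "(of_nat D - of_nat N) * r N = (of_nat D - of_nat (Suc n)) * ((-1)^(Suc n) * eP a (Suc n))"
      using ND Suc by (simp add: r_def)
    also have "\<dots> = (-1)^n * (of_nat (Suc n) * eP a (Suc n)) + (-1)^(Suc n) * eP a (Suc n) * of_nat D"
      by (simp add: algebra_simps)
    finally show ?thesis using l1 l2 by simp
  qed
qed

lemma key_fps:
  fixes a :: "nat \<Rightarrow> 'k::field_char_0"
  assumes a1: "a 1 = of_nat D" and van: "\<And>x. hP a D x = 0"
  defines "r \<equiv> (\<lambda>k. if k \<le> D then (-1)^k * eP a k else 0)"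
  shows "Abs_fps (\<lambda>s. a (s + 1)) * Abs_fps r = of_nat D * Abs_fps r - fps_X * fps_deriv (Abs_fps r)"
proof (rule fps_ext)
  fix N
  have "(Abs_fps (\<lambda>s. a (s + 1)) * Abs_fps r) $ N = (Abs_fps r * Abs_fps (\<lambda>s. a (s + 1))) $ N"
    by (simp add: mult.commute)
  also have "\<dots> = (\<Sum>i=0..N. r i * a (N - i + 1))" by (simp add: fps_mult_nth)
  also have "\<dots> = (of_nat D - of_nat N) * r N" unfolding r_def by (rule key_coeff[OF a1 van])
  also have "\<dots> = (of_nat D * Abs_fps r - fps_X * fps_deriv (Abs_fps r)) $ N"
    by (cases N) (simp_all add: fps_of_nat[symmetric] algebra_simps)
  finally show "(Abs_fps (\<lambda>s. a (s + 1)) * Abs_fps r) $ N = (of_nat D * Abs_fps r - fps_X * fps_deriv (Abs_fps r)) $ N" .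
qed

lemma inv_lin: "(1 - fps_const (l::'k::field) * fps_X) * inverse (1 - fps_const l * fps_X) = 1"
  by (rule inverse_mult_eq_1') simp

lemma logderiv:
  fixes ls :: "'k::field list"
  shows "fps_X * fps_deriv (prod_list (map (\<lambda>l. 1 - fps_const l * fps_X) ls))
    = prod_list (map (\<lambda>l. 1 - fps_const l * fps_X) ls) * sum_list (map (\<lambda>l. 1 - inverse (1 - fps_const l * fps_X)) ls)"
proof (induction ls)
  case Nil then show ?case by simp
next
  case (Cons l ls)
  define P where "P = prod_list (map (\<lambda>l. 1 - fps_const l * fps_X) ls)"
  define Q where "Q = sum_list (map (\<lambda>l. 1 - inverse (1 - fps_const l * fps_X)) ls)"
  define A where "A = 1 - fps_const l * fps_X"
  have IH: "fps_X * fps_deriv P = P * Q" using Cons.IH unfolding P_def Q_def .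
  have dA: "fps_deriv A = fps_const (- l)" unfolding A_def by simp
  have iA: "A * inverse A = 1" unfolding A_def by (rule inv_lin)
  have "fps_X * fps_deriv (A * P) = fps_X * (fps_deriv A * P + A * fps_deriv P)" by simp
  also have "\<dots> = fps_const (- l) * fps_X * P + A * (fps_X * fps_deriv P)" unfolding dA by (simp add: algebra_simps)
  also have "\<dots> = fps_const (- l) * fps_X * P + A * (P * Q)" unfolding IH ..
  also have "\<dots> = A * P * ((1 - inverse A) + Q)"
  proof -
    have "A * P * (1 - inverse A) = A * P - P * (A * inverse A)" by (simp add: algebra_simps)
    also have "\<dots> = A * P - P" unfolding iA by simp
    also have "\<dots> = fps_const (- l) * fps_X * P" unfolding A_def fps_const_neg[symmetric]
      by (simp add: algebra_simps del: fps_const_neg)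
    finally have X1: "A * P * (1 - inverse A) = fps_const (- l) * fps_X * P" .
    have "A * P * ((1 - inverse A) + Q) = A * P * (1 - inverse A) + A * P * Q" by (rule distrib_left)
    then show ?thesis unfolding X1 by (simp add: mult.assoc)
  qed
  finally show ?case unfolding P_def Q_def A_def by simp
qed


lemma poly_prod_list_map: "poly (prod_list (map f xs)) y = prod_list (map (\<lambda>x. poly (f x) y) xs)"
  by (induct xs) simp_all

lemma lin_factor_split:
  fixes xs :: "'k::field list"
  assumes "\<forall>x\<in>set xs. x \<noteq> 0"
  shows "prod_list (map (\<lambda>x. [:-x, 1:]) xs) = smult (prod_list (map uminus xs)) (prod_list (map (\<lambda>x. [:1, -(1/x):]) xs))"
  using assms
proof (induct xs)
  case Nil then show ?case by simp
next
  case (Cons x xs)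
  have x: "x \<noteq> 0" using Cons.prems by simp
  have e: "[:-x, 1:] = smult (-x) [:1, -(1/x):]" using x by simp
  have IH: "prod_list (map (\<lambda>x. [:-x, 1:]) xs) = smult (prod_list (map uminus xs)) (prod_list (map (\<lambda>x. [:1, -(1/x):]) xs))"
    using Cons by simp
  have "prod_list (map (\<lambda>x. [:-x, 1:]) (x # xs)) = [:-x, 1:] * prod_list (map (\<lambda>x. [:-x, 1:]) xs)" by simp
  also have "\<dots> = smult (-x) [:1, -(1/x):] * smult (prod_list (map uminus xs)) (prod_list (map (\<lambda>x. [:1, -(1/x):]) xs))"
    by (subst e) (simp only: IH)
  also have "\<dots> = smult (-x * prod_list (map uminus xs)) ([:1, -(1/x):] * prod_list (map (\<lambda>x. [:1, -(1/x):]) xs))"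
    by (simp only: mult_smult_left mult_smult_right smult_smult mult.commute)
  finally show ?case by (simp only: list.map prod_list.Cons)
qed

lemma fps_lin: "fps_of_poly [:1, -(y::'k::field):] = 1 - fps_const y * fps_X"
  by (simp add: fps_of_poly_pCons fps_of_poly_const)

lemma factor_R:
  fixes r :: "nat \<Rightarrow> 'k::alg_closed_field"
  assumes r0: "r 0 = 1" and rD: "\<And>k. k > D \<Longrightarrow> r k = 0"
  obtains ls where "length ls \<le> D" "\<forall>l\<in>set ls. l \<noteq> 0"
    "Abs_fps r = prod_list (map (\<lambda>l. 1 - fps_const l * fps_X) ls)"
proof -
  define Rp where "Rp = (\<Sum>k\<le>D. monom (r k) k)"
  have cR: "coeff Rp k = r k" for k
  proof -
    have "coeff Rp k = (\<Sum>i\<le>D. if i = k then r i else 0)" unfolding Rp_def by (simp add: coeff_sum coeff_monom)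
    also have "\<dots> = (if k \<le> D then r k else 0)" by (simp add: sum.delta)
    also have "\<dots> = r k" using rD by simp
    finally show ?thesis .
  qed
  have Rnz: "Rp \<noteq> 0" using cR[of 0] r0 by auto
  have degR: "degree Rp \<le> D" by (rule degree_le) (simp add: cR rD)
  obtain A where A: "size A = degree Rp" "Rp = smult (lead_coeff Rp) (\<Prod>x\<in>#A. [:-x, 1:])"
    using alg_closed_imp_factorization[OF Rnz] by blast
  obtain xs where xs: "A = mset xs" by (metis ex_mset)
  have pm: "(\<Prod>x\<in>#A. [:-x, 1:]) = prod_list (map (\<lambda>x. [:-x, 1:]) xs)"
    unfolding xs by (metis mset_map prod_mset_prod_list)
  have p0: "poly Rp 0 = 1" using cR[of 0] r0 by (simp add: poly_0_coeff_0)
  have "poly Rp 0 = lead_coeff Rp * prod_list (map uminus xs)"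
    by (subst A(2)) (simp add: pm poly_prod_list_map)
  then have lc: "lead_coeff Rp * prod_list (map uminus xs) = 1" using p0 by simp
  have nz: "\<forall>x\<in>set xs. x \<noteq> 0"
  proof
    fix x assume "x \<in> set xs"
    show "x \<noteq> 0"
    proof
      assume "x = 0"
      then have "0 \<in> set (map uminus xs)" using \<open>x \<in> set xs\<close> by force
      then have "prod_list (map uminus xs) = 0" by (simp add: prod_list_zero_iff)
      then show False using lc by simp
    qed
  qed
  have R2: "Rp = prod_list (map (\<lambda>x. [:1, -(1/x):]) xs)"
    using A(2) unfolding pm lin_factor_split[OF nz] by (simp add: lc)
  define ls where "ls = map (\<lambda>x. 1/x) xs"
  have "Abs_fps r = fps_of_poly Rp" by (rule fps_ext) (simp add: cR)
  also have "\<dots> = prod_list (map (\<lambda>l. 1 - fps_const l * fps_X) ls)"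
    unfolding R2 ls_def fps_of_poly_prod_list by (simp add: fps_lin o_def)
  finally have "Abs_fps r = prod_list (map (\<lambda>l. 1 - fps_const l * fps_X) ls)" .
  moreover have "length ls \<le> D" unfolding ls_def using A(1) degR xs by simp
  moreover have "\<forall>l\<in>set ls. l \<noteq> 0" unfolding ls_def using nz by simp
  ultimately show ?thesis using that by blast
qed

lemma sum_list_one_minus:
  fixes f :: "'b \<Rightarrow> 'a::comm_ring_1"
  shows "sum_list (map (\<lambda>l. 1 - f l) ls) = of_nat (length ls) - sum_list (map f ls)"
  by (induct ls) (simp_all add: algebra_simps)

lemma S_form:
  fixes a :: "nat \<Rightarrow> 'k::{alg_closed_field, field_char_0}"
  assumes a1: "a 1 = of_nat D" and van: "\<And>x. hP a D x = 0"
  obtains ls where "length ls \<le> D" "\<forall>l\<in>set ls. l \<noteq> 0"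
    "Abs_fps (\<lambda>s. a (s + 1)) = of_nat (D - length ls) + sum_list (map (\<lambda>l. inverse (1 - fps_const l * fps_X)) ls)"
proof -
  define r where "r = (\<lambda>k. if k \<le> D then (-1)^k * eP a k else (0::'k))"
  have r0: "r 0 = 1" unfolding r_def by (simp add: eP_def fP0)
  obtain ls where ls: "length ls \<le> D" "\<forall>l\<in>set ls. l \<noteq> 0"
    "Abs_fps r = prod_list (map (\<lambda>l. 1 - fps_const l * fps_X) ls)"
    using factor_R[of r D] r0 unfolding r_def by auto
  define R where "R = Abs_fps r"
  define S where "S = Abs_fps (\<lambda>s. a (s + 1))"
  define W where "W = of_nat (D - length ls) + sum_list (map (\<lambda>l. inverse (1 - fps_const l * fps_X)) ls)"
  have k: "S * R = of_nat D * R - fps_X * fps_deriv R"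
    unfolding S_def R_def r_def by (rule key_fps[OF a1 van])
  have ld: "fps_X * fps_deriv R = R * (of_nat (length ls) - sum_list (map (\<lambda>l. inverse (1 - fps_const l * fps_X)) ls))"
    unfolding R_def ls(3) logderiv sum_list_one_minus ..
  have od: "(of_nat (D - length ls) :: 'k fps) = of_nat D - of_nat (length ls)"
    using ls(1) by (rule of_nat_diff)
  have SR: "S * R = R * W"
    unfolding k ld W_def od by algebra
  have R0: "R $ 0 \<noteq> 0" unfolding R_def using r0 by simp
  have RI: "R * inverse R = 1" by (rule inverse_mult_eq_1'[OF R0])
  have "S = S * (R * inverse R)" unfolding RI by simp
  also have "\<dots> = (S * R) * inverse R" by (simp only: mult.assoc)
  also have "\<dots> = W * (R * inverse R)" unfolding SR by (simp only: mult.assoc mult.commute mult.left_commute)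
  also have "\<dots> = W" unfolding RI by simp
  finally have "S = W" .
  then show ?thesis using that ls(1,2) unfolding S_def W_def by blast
qed

lemma fps_const_sum_lt: "fps_const (\<Sum>i<(s::nat). f i) = (\<Sum>i<s. fps_const (f i))"
  by (induct s) (simp_all add: fps_const_add[symmetric] del: fps_const_add)

lemma term_conv:
  fixes c :: "'k::field"
  assumes c: "c \<noteq> 0"
  shows "fps_X * inverse (1 - fps_const c * fps_X) = fps_const (1 / c) * inverse (1 - fps_const c * fps_X) - fps_const (1 / c)"
proof -
  define B where "B = 1 - fps_const c * fps_X"
  have BI: "B * inverse B = 1" unfolding B_def by (rule inv_lin)
  have cc: "fps_const (1 / c) * fps_const c = 1" using c by (simp add: fps_const_mult[symmetric])
  have "fps_const (1 / c) * inverse B - fps_const (1 / c) = fps_const (1 / c) * (inverse B - B * inverse B)"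
    unfolding BI by (simp add: algebra_simps)
  also have "\<dots> = (fps_const (1 / c) * fps_const c) * fps_X * inverse B"
    unfolding B_def by (simp add: algebra_simps)
  also have "\<dots> = fps_X * inverse B" unfolding cc by simp
  finally show ?thesis unfolding B_def by simp
qed

theorem mainTheorem11:
  fixes a :: "nat \<Rightarrow> 'k::{alg_closed_field, field_char_0}"
  assumes "pseudocharacter a"
  shows "\<exists>(m::nat) (s::nat) (ms::nat \<Rightarrow> nat) (lam::nat \<Rightarrow> 'k).
           (\<forall>i<s. ms i \<ge> 1 \<and> lam i \<noteq> 0) \<and>
           Z_alpha a = fps_const (a 0) + of_nat m * fps_X
              + (\<Sum>i<s. fps_const (of_nat (ms i)) * fps_X / (1 - fps_const (lam i) * fps_X)) \<and>
           Z_alpha a = fps_const (a 0 - (\<Sum>i<s. of_nat (ms i) / lam i)) + of_nat m * fps_X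
              + (\<Sum>i<s. fps_const (of_nat (ms i) / lam i) / (1 - fps_const (lam i) * fps_X)) \<and>
           cob_degree a 1 = m + (\<Sum>i<s. ms i) \<and>
           of_nat (cob_degree a 1) = a 1"
proof -
  obtain D where D: "a 1 = of_nat D" "degree_bound a 1 D" "cob_degree a 1 = D"
    using cob_degree_main[OF assms] by blast
  have van: "\<And>x. hP a D x = 0" by (rule vanish[OF D(2)])
  obtain ls where ls: "length ls \<le> D" "\<forall>l\<in>set ls. l \<noteq> 0"
    "Abs_fps (\<lambda>s. a (s + 1)) = of_nat (D - length ls) + sum_list (map (\<lambda>l. inverse (1 - fps_const l * fps_X)) ls)"
    using S_form[OF D(1) van] by blast
  define s where "s = length ls"
  define lam where "lam = (\<lambda>i. ls ! i)"
  define m where "m = D - s"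
  define ms :: "nat \<Rightarrow> nat" where "ms = (\<lambda>_. 1)"
  define B where "B = (\<lambda>i. 1 - fps_const (lam i) * fps_X)"
  have lnz: "\<forall>i<s. lam i \<noteq> 0" using ls(2) unfolding s_def lam_def by simp
  have B0: "B i $ 0 \<noteq> 0" for i unfolding B_def by simp
  have Sform: "Abs_fps (\<lambda>s. a (s + 1)) = of_nat m + (\<Sum>i<s. inverse (B i))"
    unfolding ls(3) m_def s_def B_def lam_def sum_list_sum_nth atLeast0LessThan by simp
  have Z: "Z_alpha a = fps_const (a 0) + fps_X * Abs_fps (\<lambda>s. a (s + 1))"
    unfolding Z_alpha_def by (rule fps_ext) (simp split: nat.split)
  have Z1: "Z_alpha a = fps_const (a 0) + of_nat m * fps_X + (\<Sum>i<s. fps_X * inverse (B i))"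
    unfolding Z Sform by (simp add: algebra_simps sum_distrib_left)
  have e1: "fps_const (of_nat (ms i)) * fps_X / (1 - fps_const (lam i) * fps_X) = fps_X * inverse (B i)" for i
    using fps_divide_unit[OF B0[of i]] unfolding ms_def B_def by simp
  have e2: "fps_const (of_nat (ms i) / lam i) / (1 - fps_const (lam i) * fps_X)
      = fps_X * inverse (B i) + fps_const (1 / lam i)" if "i < s" for i
    using fps_divide_unit[OF B0[of i]] term_conv[of "lam i"] lnz that unfolding ms_def B_def by simp
  have "(\<Sum>i<s. fps_const (of_nat (ms i) / lam i) / (1 - fps_const (lam i) * fps_X))
      = (\<Sum>i<s. fps_X * inverse (B i)) + fps_const (\<Sum>i<s. of_nat (ms i) / lam i)"
    unfolding fps_const_sum_lt sum.distrib[symmetric] using e2 by (intro sum.cong) (simp_all add: ms_def)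
  then have Z2: "Z_alpha a = fps_const (a 0 - (\<Sum>i<s. of_nat (ms i) / lam i)) + of_nat m * fps_X
              + (\<Sum>i<s. fps_const (of_nat (ms i) / lam i) / (1 - fps_const (lam i) * fps_X))"
    unfolding Z1 by (simp add: algebra_simps fps_const_add[symmetric] del: fps_const_add)
  have Z1': "Z_alpha a = fps_const (a 0) + of_nat m * fps_X
              + (\<Sum>i<s. fps_const (of_nat (ms i)) * fps_X / (1 - fps_const (lam i) * fps_X))"
    unfolding Z1 using e1 by simp
  have cd: "cob_degree a 1 = m + (\<Sum>i<s. ms i)" unfolding D(3) m_def ms_def s_def using ls(1) by simp
  have cd2: "of_nat (cob_degree a 1) = a 1" unfolding D(3) D(1) ..
  show ?thesis
    by (rule exI[of _ m], rule exI[of _ s], rule exI[of _ ms], rule exI[of _ lam])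
       (use lnz Z1' Z2 cd cd2 in \<open>simp add: ms_def\<close>)
qed

end
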